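(* Let $p$ be a prime with $p\equiv3\pmod 4$. Then $P_{\frac{p-1}2}(3)\equiv0\pmod p$ (i.e. $p$ divides the numerator of the rational number $P_{\frac{p-1}2}(3)$).
   Context: $P_n(x)$ is the $n$-th Legendre polynomial, defined by $\frac1{\sqrt{1-2xt+t^2}}=\sum_{n\ge0}P_n(x)t^n$, equivalently $P_n(x)=\frac1{2^n}\sum_{k=0}^{[n/2]}\frac{(-1)^k(2n-2k)!}{k!(n-k)!(n-2k)!}x^{n-2k}$. *)

theory Defs
  imports Complex_Main "HOL-Computational_Algebra.Primes"
begin

definition legendreP :: "nat \<Rightarrow> 'a::field_char_0 \<Rightarrow> 'a" where
  "legendreP n x = (1 / 2 ^ n) *
     (\<Sum>k = 0..n div 2. of_int ((-1) ^ k) * of_nat (fact (2*n - 2*k))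
        / (of_nat (fact k) * of_nat (fact (n - k)) * of_nat (fact (n - 2*k)))
        * x ^ (n - 2*k))"

end

theory Submission
  imports Defs "HOL-Number_Theory.Number_Theory"
begin

definition psum :: "nat \<Rightarrow> nat \<Rightarrow> int" where
  "psum p m = (\<Sum>t<p. int t ^ m)"

lemma psum_identity:
  "(\<Sum>i\<le>m. of_nat (Suc m choose i) * psum p i) = int p ^ Suc m"
proof -
  have tel: "(\<Sum>t<p. int (Suc t) ^ Suc m - int t ^ Suc m) = int p ^ Suc m"
    using sum_lessThan_telescope[of "\<lambda>t. int t ^ Suc m" p] by simp
  have tm: "int (Suc t) ^ Suc m - int t ^ Suc m = (\<Sum>i\<le>m. of_nat (Suc m choose i) * int t ^ i)" for t
  proof -
    have "int (Suc t) ^ Suc m = (int t + 1) ^ Suc m" by (simp add: add.commute)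
    also have "\<dots> = (\<Sum>k\<le>Suc m. of_nat (Suc m choose k) * int t ^ k * 1 ^ (Suc m - k))"
      by (rule binomial_ring)
    also have "\<dots> = (\<Sum>i\<le>m. of_nat (Suc m choose i) * int t ^ i) + int t ^ Suc m"
      by (simp add: sum.atMost_Suc)
    finally show ?thesis by simp
  qed
  have "(\<Sum>i\<le>m. of_nat (Suc m choose i) * psum p i) = (\<Sum>i\<le>m. \<Sum>t<p. of_nat (Suc m choose i) * int t ^ i)"
    by (simp add: psum_def sum_distrib_left)
  also have "\<dots> = (\<Sum>t<p. \<Sum>i\<le>m. of_nat (Suc m choose i) * int t ^ i)"
    by (rule sum.swap)
  also have "\<dots> = int p ^ Suc m" using tel tm by simp
  finally show ?thesis .
qed

lemma psum_zero:
  assumes "prime p" "1 \<le> m" "m + 2 \<le> p"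
  shows "int p dvd psum p m"
  using assms(2,3)
proof (induction m rule: less_induct)
  case (less m)
  have id: "(\<Sum>i\<le>m. of_nat (Suc m choose i) * psum p i) = int p ^ Suc m"
    by (rule psum_identity)
  have split: "(\<Sum>i\<le>m. of_nat (Suc m choose i) * psum p i)
      = of_nat (Suc m) * psum p m + (of_nat (Suc m choose 0) * psum p 0 + (\<Sum>i\<in>{1..<m}. of_nat (Suc m choose i) * psum p i))"
  proof -
    have "{..m} = insert m (insert 0 {1..<m})" using less.prems by auto
    then show ?thesis using less.prems by (simp add: sum.insert)
  qed
  have d1: "int p dvd (\<Sum>i\<in>{1..<m}. of_nat (Suc m choose i) * psum p i)"
    by (rule dvd_sum) (use less in auto)
  have d0: "int p dvd psum p 0" by (simp add: psum_def)
  have "int p dvd of_nat (Suc m) * psum p m"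
  proof -
    have "int p dvd int p ^ Suc m" by simp
    then have "int p dvd of_nat (Suc m) * psum p m + (of_nat (Suc m choose 0) * psum p 0 + (\<Sum>i\<in>{1..<m}. of_nat (Suc m choose i) * psum p i))"
      using id split by simp
    moreover have "int p dvd (of_nat (Suc m choose 0) * psum p 0 + (\<Sum>i\<in>{1..<m}. of_nat (Suc m choose i) * psum p i))"
      using d0 d1 by simp
    ultimately show ?thesis using dvd_add_left_iff by blast
  qed
  moreover have "prime (int p)" using assms(1) by simp
  moreover have "\<not> int p dvd of_nat (Suc m)"
  proof
    assume "int p dvd of_nat (Suc m)"
    then have "int p dvd int (Suc m)" by simp
    then have "p dvd Suc m" by (simp only: int_dvd_int_iff)
    then have "p \<le> Suc m" by (simp add: dvd_imp_le)
    then show False using less.prems by simp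
  qed
  ultimately show ?case using prime_dvd_mult_iff by blast
qed

lemma fermat_int:
  assumes "prime p" "0 < t" "t < p"
  shows "[int t ^ (p - 1) = 1] (mod int p)"
proof -
  have "\<not> p dvd t" using assms by (auto dest: dvd_imp_le)
  then have "[t ^ (p - 1) = 1] (mod p)" using fermat_theorem assms(1) by blast
  then show ?thesis using cong_int_iff by (metis of_nat_1 of_nat_power)
qed

lemma psum_shift:
  assumes "prime p" "p \<le> m"
  shows "[psum p m = psum p (m - (p - 1))] (mod int p)"
  unfolding psum_def
proof (rule cong_sum)
  fix t assume t: "t \<in> {..<p}"
  have p2: "p \<ge> 2" using assms(1) prime_ge_2_nat by blast
  have m: "m = (m - (p - 1)) + (p - 1)" using assms p2 by simp
  show "[int t ^ m = int t ^ (m - (p - 1))] (mod int p)"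
  proof (cases "t = 0")
    case True
    have "m > 0" "m - (p - 1) > 0" using assms p2 by auto
    then show ?thesis using True by (simp add: cong_def zero_power)
  next
    case False
    then have "[int t ^ (m - (p - 1)) * int t ^ (p - 1) = int t ^ (m - (p - 1)) * 1] (mod int p)"
      using fermat_int[OF assms(1)] t by (intro cong_mult cong_refl) auto
    then show ?thesis by (metis m mult.right_neutral power_add)
  qed
qed

lemma psum_top:
  assumes "prime p"
  shows "[psum p (p - 1) = - 1] (mod int p)"
proof -
  have p2: "p \<ge> 2" using assms(1) prime_ge_2_nat by blast
  have "[psum p (p - 1) = (\<Sum>t<p. if t = 0 then 0 else 1)] (mod int p)"
    unfolding psum_def
  proof (rule cong_sum)
    fix t assume t: "t \<in> {..<p}"
    show "[int t ^ (p - 1) = (if t = 0 then 0 else 1)] (mod int p)"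
      using fermat_int[OF assms(1), of t] t p2 by (auto simp: cong_def zero_power)
  qed
  moreover have "(\<Sum>t<p. if t = 0 then 0 else 1 :: int) = int p - 1"
  proof -
    have "(\<Sum>t<p. if t = 0 then 0 else 1 :: int) = (\<Sum>t\<in>{..<p} - {0}. 1)"
      by (simp add: sum.If_cases Diff_eq Int_commute)
    also have "\<dots> = int p - 1" using p2 by simp
    finally show ?thesis .
  qed
  moreover have "[int p - 1 = -1] (mod int p)" by (simp add: cong_iff_dvd_diff)
  ultimately show ?thesis using cong_trans by metis
qed

lemma sym_sum:
  assumes "prime p" "p > 2" "odd n"
  shows "int p dvd (\<Sum>t<p. (int t * (int t + 2) * (int t + 4)) ^ n)"
proof -
  define P where "P = int p"
  have P0: "P > 0" using assms unfolding P_def by simp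
  define g where "g = (\<lambda>x::int. (x * (x + 2) * (x + 4)) ^ n)"
  define \<sigma> where "\<sigma> = (\<lambda>t::nat. nat ((-4 - int t) mod P))"
  have sig_int: "int (\<sigma> t) = (-4 - int t) mod P" for t
    unfolding \<sigma>_def using P0 by simp
  have sig_lt: "\<sigma> t < p" for t
  proof -
    have "(-4 - int t) mod P < P" using P0 by simp
    then show ?thesis using sig_int[of t] unfolding P_def by linarith
  qed
  have invol: "\<sigma> (\<sigma> t) = t" if "t < p" for t
  proof -
    have "int (\<sigma> (\<sigma> t)) = (-4 - ((-4 - int t) mod P)) mod P" using sig_int by simp
    also have "\<dots> = (-4 - (-4 - int t)) mod P" by (simp add: mod_diff_right_eq)
    also have "\<dots> = int t" using that unfolding P_def by simp
    finally show ?thesis by simp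
  qed
  have bij: "bij_betw \<sigma> {..<p} {..<p}"
    by (rule bij_betw_byWitness[where f'=\<sigma>]) (use invol sig_lt in auto)
  have S_eq: "(\<Sum>t<p. g (int (\<sigma> t))) = (\<Sum>t<p. g (int t))"
    using sum.reindex_bij_betw[OF bij, of "\<lambda>t. g (int t)"] by simp
  have cong1: "[g (int (\<sigma> t)) = - g (int t)] (mod P)" for t
  proof -
    have c: "[int (\<sigma> t) = -4 - int t] (mod P)" using sig_int by (simp add: cong_def)
    have "[g (int (\<sigma> t)) = g (-4 - int t)] (mod P)"
      unfolding g_def by (intro cong_pow cong_mult cong_add c cong_refl)
    moreover have "g (-4 - int t) = - g (int t)"
    proof -
      have eq: "(-4 - int t) * ((-4 - int t) + 2) * ((-4 - int t) + 4) = - (int t * (int t + 2) * (int t + 4))"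
        by (simp add: algebra_simps)
      show ?thesis unfolding g_def by (simp only: eq) (rule power_minus_odd[OF assms(3)])
    qed
    ultimately show ?thesis by simp
  qed
  have "[(\<Sum>t<p. g (int (\<sigma> t))) = (\<Sum>t<p. - g (int t))] (mod P)"
    by (rule cong_sum) (rule cong1)
  then have "[(\<Sum>t<p. g (int t)) = - (\<Sum>t<p. g (int t))] (mod P)"
    using S_eq by (simp add: sum_negf)
  then have "P dvd 2 * (\<Sum>t<p. g (int t))"
    by (simp add: cong_iff_dvd_diff)
  moreover have "prime P" using assms(1) unfolding P_def by simp
  moreover have "\<not> P dvd 2"
  proof
    assume "P dvd 2"
    then have "P \<le> 2" by (simp add: zdvd_imp_le)
    then show False using assms(2) unfolding P_def by simp
  qed
  ultimately have "P dvd (\<Sum>t<p. g (int t))" using prime_dvd_mult_iff by blast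
  then show ?thesis unfolding P_def g_def by simp
qed

definition cc :: "nat \<Rightarrow> nat \<Rightarrow> nat \<Rightarrow> int" where
  "cc n k i = (-1) ^ k * of_nat (n choose k) * of_nat ((2*n - 2*k) choose i) * 3 ^ (2*n - 2*k - i)"

lemma expand:
  fixes x :: int
  shows "(x * (x + 2) * (x + 4)) ^ n = (\<Sum>k\<le>n. \<Sum>i\<le>2*n-2*k. cc n k i * x ^ (n + i))"
proof -
  have "(x * (x + 2) * (x + 4)) ^ n = x ^ n * ((-1) + (x + 3)^2) ^ n"
    by (simp add: power_mult_distrib[symmetric] algebra_simps power2_eq_square)
  also have "((-1) + (x + 3)^2) ^ n = (\<Sum>k\<le>n. of_nat (n choose k) * (-1) ^ k * ((x + 3)^2) ^ (n - k))"
    by (rule binomial_ring)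
  also have "\<dots> = (\<Sum>k\<le>n. of_nat (n choose k) * (-1) ^ k * (\<Sum>i\<le>2*n-2*k. of_nat ((2*n-2*k) choose i) * x ^ i * 3 ^ (2*n-2*k-i)))"
  proof (rule sum.cong[OF refl])
    fix k assume "k \<in> {..n}"
    have "((x + 3)^2) ^ (n - k) = (x + 3) ^ (2*n-2*k)"
      by (simp add: power_mult[symmetric] diff_mult_distrib2)
    also have "\<dots> = (\<Sum>i\<le>2*n-2*k. of_nat ((2*n-2*k) choose i) * x ^ i * 3 ^ (2*n-2*k-i))"
      by (rule binomial_ring)
    finally show "of_nat (n choose k) * (-1) ^ k * ((x + 3)^2) ^ (n - k) = of_nat (n choose k) * (-1) ^ k * (\<Sum>i\<le>2*n-2*k. of_nat ((2*n-2*k) choose i) * x ^ i * 3 ^ (2*n-2*k-i))"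
      by simp
  qed
  finally show ?thesis
    by (simp add: sum_distrib_left cc_def power_add algebra_simps)
qed

lemma main_dvd:
  assumes "prime p" "p mod 4 = 3"
  defines "n \<equiv> (p - 1) div 2"
  shows "int p dvd (\<Sum>k\<le>n. (-1) ^ k * of_nat (n choose k) * of_nat ((2*n - 2*k) choose n) * 3 ^ (n - 2*k))"
proof -
  have pn: "p = 2 * n + 1" using assms(2) unfolding n_def by presburger
  have n1: "n \<ge> 1" and nodd: "odd n" using assms(2) unfolding n_def by presburger+
  have p2: "p > 2" using pn n1 by simp
  define P where "P = int p"
  have ps: "[psum p (n + i) = (if i = n then -1 else 0)] (mod P)" if "i \<le> 2 * n" for i
  proof -
    consider "i < n" | "i = n" | "i > n" by linarith
    then show ?thesis
    proof cases
      case 1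
      then show ?thesis using psum_zero[OF assms(1), of "n + i"] n1 pn
        by (simp add: P_def cong_0_iff)
    next
      case 2
      have e: "n + i = p - 1" using 2 pn by simp
      show ?thesis unfolding e using psum_top[OF assms(1)] 2 by (simp add: P_def)
    next
      case 3
      have "[psum p (n + i) = psum p (n + i - (p - 1))] (mod P)"
        using psum_shift[OF assms(1), of "n + i"] 3 pn by (simp add: P_def)
      moreover have "n + i - (p - 1) = i - n" using pn 3 by simp
      moreover have "P dvd psum p (i - n)"
        using psum_zero[OF assms(1), of "i - n"] 3 pn that by (simp add: P_def)
      ultimately show ?thesis using 3
        by (simp add: cong_0_iff) (metis cong_0_iff cong_trans)
    qed
  qed
  have "P dvd (\<Sum>t<p. (int t * (int t + 2) * (int t + 4)) ^ n)"
    using sym_sum[OF assms(1) p2 nodd] by (simp add: P_def)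
  also have "(\<Sum>t<p. (int t * (int t + 2) * (int t + 4)) ^ n)
      = (\<Sum>k\<le>n. \<Sum>i\<le>2*n-2*k. cc n k i * psum p (n + i))"
  proof -
    have "(\<Sum>t<p. (int t * (int t + 2) * (int t + 4)) ^ n)
        = (\<Sum>t<p. \<Sum>k\<le>n. \<Sum>i\<le>2*n-2*k. cc n k i * int t ^ (n + i))"
      by (simp only: expand)
    also have "\<dots> = (\<Sum>k\<le>n. \<Sum>t<p. \<Sum>i\<le>2*n-2*k. cc n k i * int t ^ (n + i))"
      by (rule sum.swap)
    also have "\<dots> = (\<Sum>k\<le>n. \<Sum>i\<le>2*n-2*k. \<Sum>t<p. cc n k i * int t ^ (n + i))"
      by (simp only: sum.swap[of _ "{..<p}"])
    also have "\<dots> = (\<Sum>k\<le>n. \<Sum>i\<le>2*n-2*k. cc n k i * psum p (n + i))"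
      by (simp add: psum_def sum_distrib_left)
    finally show ?thesis .
  qed
  finally have d: "P dvd (\<Sum>k\<le>n. \<Sum>i\<le>2*n-2*k. cc n k i * psum p (n + i))" .
  have c2: "[(\<Sum>k\<le>n. \<Sum>i\<le>2*n-2*k. cc n k i * psum p (n + i))
      = (\<Sum>k\<le>n. \<Sum>i\<le>2*n-2*k. cc n k i * (if i = n then -1 else 0))] (mod P)"
    by (intro cong_sum cong_mult cong_refl ps) auto
  have inner: "(\<Sum>i\<le>2*n-2*k. cc n k i * (if i = n then -1 else 0))
      = - ((-1) ^ k * of_nat (n choose k) * of_nat ((2*n - 2*k) choose n) * 3 ^ (n - 2*k))" for k
  proof (cases "n \<le> 2*n - 2*k")
    case True
    have "(\<Sum>i\<le>2*n-2*k. cc n k i * (if i = n then -1 else 0)) = (\<Sum>i\<le>2*n-2*k. if i = n then - cc n k i else 0)"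
      by (rule sum.cong) auto
    also have "\<dots> = - cc n k n" using True by (simp add: sum.delta)
    also have "2*n - 2*k - n = n - 2*k" by simp
    then have "- cc n k n = - ((-1) ^ k * of_nat (n choose k) * of_nat ((2*n - 2*k) choose n) * 3 ^ (n - 2*k))"
      by (simp add: cc_def)
    finally show ?thesis .
  next
    case False
    then have "(\<Sum>i\<le>2*n-2*k. cc n k i * (if i = n then -1 else 0)) = 0"
      by (intro sum.neutral) auto
    moreover have "(2*n - 2*k) choose n = 0" using False by simp
    ultimately show ?thesis by simp
  qed
  have "P dvd (\<Sum>k\<le>n. \<Sum>i\<le>2*n-2*k. cc n k i * (if i = n then -1 else 0))"
    using d c2 cong_dvd_iff by blast
  then have "P dvd - (\<Sum>k\<le>n. (-1) ^ k * of_nat (n choose k) * of_nat ((2*n - 2*k) choose n) * 3 ^ (n - 2*k))"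
    by (simp add: inner sum_negf)
  then show ?thesis by (simp add: P_def)
qed

lemma term_eq:
  assumes "2 * k \<le> n"
  shows "of_int ((-1) ^ k) * of_nat (fact (2*n - 2*k)) / (of_nat (fact k) * of_nat (fact (n - k)) * of_nat (fact (n - 2*k))) * (3::rat) ^ (n - 2*k)
    = of_int ((-1) ^ k * of_nat (n choose k) * of_nat ((2*n - 2*k) choose n) * 3 ^ (n - 2*k))"
proof -
  have b1: "(of_nat (n choose k) :: rat) = fact n / (fact k * fact (n - k))"
    using assms by (intro binomial_fact) simp
  have e: "2*n - 2*k - n = n - 2*k" by simp
  have b2: "(of_nat ((2*n - 2*k) choose n) :: rat) = fact (2*n - 2*k) / (fact n * fact (n - 2*k))"
  proof -
    have "n \<le> 2*n - 2*k" using assms by simp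
    from binomial_fact[OF this, where 'a=rat] show ?thesis unfolding e .
  qed
  have r: "(of_int ((-1) ^ k * of_nat (n choose k) * of_nat ((2*n - 2*k) choose n) * 3 ^ (n - 2*k)) :: rat)
     = (-1) ^ k * (of_nat (n choose k)) * (of_nat ((2*n - 2*k) choose n)) * 3 ^ (n - 2*k)" by simp
  also have "\<dots> = (-1) ^ k * (fact n / (fact k * fact (n - k))) * (fact (2*n - 2*k) / (fact n * fact (n - 2*k))) * 3 ^ (n - 2*k)"
    by (simp only: b1 b2)
  also have "\<dots> = of_int ((-1) ^ k) * of_nat (fact (2*n - 2*k)) / (of_nat (fact k) * of_nat (fact (n - k)) * of_nat (fact (n - 2*k))) * (3::rat) ^ (n - 2*k)"
    by (simp add: of_nat_fact)
  finally show ?thesis by simp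
qed

lemma legendre_eq:
  "legendreP n (3::rat) = of_int (\<Sum>k\<le>n. (-1) ^ k * of_nat (n choose k) * of_nat ((2*n - 2*k) choose n) * 3 ^ (n - 2*k)) / 2 ^ n"
proof -
  have "(\<Sum>k\<le>n. (-1) ^ k * of_nat (n choose k) * of_nat ((2*n - 2*k) choose n) * 3 ^ (n - 2*k) :: int)
      = (\<Sum>k=0..n div 2. (-1) ^ k * of_nat (n choose k) * of_nat ((2*n - 2*k) choose n) * 3 ^ (n - 2*k))"
    by (rule sum.mono_neutral_right) auto
  moreover have "(\<Sum>k = 0..n div 2. of_int ((-1) ^ k) * of_nat (fact (2*n - 2*k))
        / (of_nat (fact k) * of_nat (fact (n - k)) * of_nat (fact (n - 2*k))) * (3::rat) ^ (n - 2*k))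
      = (\<Sum>k=0..n div 2. of_int ((-1) ^ k * of_nat (n choose k) * of_nat ((2*n - 2*k) choose n) * 3 ^ (n - 2*k)))"
    by (rule sum.cong[OF refl], rule term_eq) auto
  ultimately show ?thesis unfolding legendreP_def by (simp add: of_int_sum)
qed

theorem corollary2p3:
  fixes p :: nat
  assumes "prime p" and "p mod 4 = 3"
  shows "int p dvd fst (quotient_of (legendreP ((p - 1) div 2) (3 :: rat)))"
proof -
  define n where "n = (p - 1) div 2"
  define N where "N = (\<Sum>k\<le>n. (-1) ^ k * of_nat (n choose k) * of_nat ((2*n - 2*k) choose n) * 3 ^ (n - 2*k) :: int)"
  have dN: "int p dvd N" using main_dvd[OF assms] unfolding N_def n_def by simp
  obtain a b where q: "quotient_of (legendreP n (3::rat)) = (a, b)" by (cases "quotient_of (legendreP n (3::rat))")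
  have ab: "legendreP n (3::rat) = of_int a / of_int b" "b > 0"
    using q quotient_of_div quotient_of_denom_pos by blast+
  have "of_int a / of_int b = (of_int N / 2 ^ n :: rat)" using ab legendre_eq[of n] unfolding N_def by simp
  then have "(of_int (a * 2 ^ n) :: rat) = of_int (N * b)" using ab(2) by (simp add: field_simps)
  then have eq: "a * 2 ^ n = N * b" by (simp only: of_int_eq_iff)
  have "int p dvd a * 2 ^ n" unfolding eq using dN by simp
  moreover have pp: "prime (int p)" using assms(1) by simp
  moreover have "\<not> int p dvd 2 ^ n"
  proof
    assume "int p dvd 2 ^ n"
    then have "int p dvd 2" using pp prime_dvd_power by blast
    then have "int p \<le> 2" using zdvd_imp_le[of "int p" 2] by simp
    then show False using assms(2) by simp
  qed
  ultimately have "int p dvd a" using prime_dvd_mult_iff by blast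
  then show ?thesis using q unfolding n_def by simp
qed

end
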